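(* Let $K,L,T$ be positive integers and $\lambda=\min\{K,L\}+T$. Let indices range over $r\in\{1,\ldots,K+T\}$, $c\in\{1,\ldots,L+T\}$, $e\in\mathbb{Z}_{\ge0}$. Then $\operatorname{N}(K,L,T)$ equals the optimal value of the binary linear program in the variables $U_e,R_{r,e},C_{c,e},M_{r,c,e}\in\{0,1\}$: minimize $\sum_e U_e$ subject to $M_{r,c,e}\le U_e$ for all $r,c,e$; $\sum_{(r,c)\neq(r',c')}M_{r,c,e}\le\lambda(1-M_{r',c',e})$ for all $e$, all $r'\le K$, $c'\le L$; $\sum_r R_{r,e}\le 1$ for all $e$; $\sum_c C_{c,e}\le1$ for all $e$; $\sum_e M_{r,c,e}=1$ for all $r,c$; $\sum_e R_{r,e}=1$ for all $r$; $\sum_e C_{c,e}=1$ for all $c$; $\sum_e e\,M_{r,c,e}=\sum_e e\,R_{r,e}+\sum_e e\,C_{c,e}$ for all $r,c$.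
   Context: A degree table with parameters $K,L,T$ is a tuple $(\alpha_{\mathrm p},\alpha_{\mathrm s},\beta_{\mathrm p},\beta_{\mathrm s})$ of nonnegative integer vectors of lengths $K,T,L,T$ such that, with $\alpha=(\alpha_{\mathrm p}\mid\alpha_{\mathrm s})$ (length $K+T$) and $\beta=(\beta_{\mathrm p}\mid\beta_{\mathrm s})$ (length $L+T$): (i) entries of $\alpha$ are distinct; (ii) entries of $\beta$ are distinct; (iii) for every integer $n\in\operatorname{Set}(\alpha_{\mathrm p})+\operatorname{Set}(\beta_{\mathrm p})$ there is a unique $i\in\operatorname{Set}(\alpha)$ and unique $j\in\operatorname{Set}(\beta)$ with $n=i+j$. $\operatorname{Set}(v)$ is the set of entries of $v$, $A+B=\{a+b\}$, $\operatorname{N}(\alpha,\beta)=|\operatorname{Set}(\alpha)+\operatorname{Set}(\beta)|$, and $\operatorname{N}(K,L,T)$ is the minimum of $\operatorname{N}(\alpha,\beta)$ over all degree tables with parameters $K,L,T$. *)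

theory Defs
  imports "HOL-Analysis.Analysis"
begin

definition sumset :: "nat set \<Rightarrow> nat set \<Rightarrow> nat set" where
  "sumset A B = {a + b | a b. a \<in> A \<and> b \<in> B}"

definition degree_table ::
  "nat \<Rightarrow> nat \<Rightarrow> nat \<Rightarrow> nat list \<Rightarrow> nat list \<Rightarrow> nat list \<Rightarrow> nat list \<Rightarrow> bool" where
  "degree_table K L T ap as bp bs \<longleftrightarrow>
     length ap = K \<and> length as = T \<and> length bp = L \<and> length bs = T \<and>
     distinct (ap @ as) \<and> distinct (bp @ bs) \<and>
     (\<forall>n \<in> sumset (set ap) (set bp).
        \<exists>!p. p \<in> set (ap @ as) \<times> set (bp @ bs) \<and> fst p + snd p = n)"

definition Nval :: "nat list \<Rightarrow> nat list \<Rightarrow> nat" where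
  "Nval \<alpha> \<beta> = card (sumset (set \<alpha>) (set \<beta>))"

definition NKLT :: "nat \<Rightarrow> nat \<Rightarrow> nat \<Rightarrow> nat" where
  "NKLT K L T = Inf {Nval (ap @ as) (bp @ bs) | ap as bp bs. degree_table K L T ap as bp bs}"

text \<open>Infinite sums over e are taken in ennreal (always defined).\<close>
definition blp_feasible ::
  "nat \<Rightarrow> nat \<Rightarrow> nat \<Rightarrow> (nat \<Rightarrow> nat) \<Rightarrow> (nat \<Rightarrow> nat \<Rightarrow> nat) \<Rightarrow> (nat \<Rightarrow> nat \<Rightarrow> nat)
     \<Rightarrow> (nat \<Rightarrow> nat \<Rightarrow> nat \<Rightarrow> nat) \<Rightarrow> bool" where
  "blp_feasible K L T U R C M \<longleftrightarrow>
     (let lam = min K L + T; Rs = {1..K+T}; Cs = {1..L+T} in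
     (\<forall>e. U e \<in> {0,1}) \<and>
     (\<forall>r e. R r e \<in> {0,1}) \<and> (\<forall>c e. C c e \<in> {0,1}) \<and> (\<forall>r c e. M r c e \<in> {0,1}) \<and>
     (\<forall>r\<in>Rs. \<forall>c\<in>Cs. \<forall>e. M r c e \<le> U e) \<and>
     (\<forall>e. \<forall>r'\<in>{1..K}. \<forall>c'\<in>{1..L}.
        int (\<Sum>(r,c) \<in> (Rs \<times> Cs) - {(r',c')}. M r c e) \<le> int lam * (1 - int (M r' c' e))) \<and>
     (\<forall>e. (\<Sum>r\<in>Rs. R r e) \<le> 1) \<and>
     (\<forall>e. (\<Sum>c\<in>Cs. C c e) \<le> 1) \<and>
     (\<forall>r\<in>Rs. \<forall>c\<in>Cs. (\<Sum>e. ennreal (of_nat (M r c e))) = 1) \<and>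
     (\<forall>r\<in>Rs. (\<Sum>e. ennreal (of_nat (R r e))) = 1) \<and>
     (\<forall>c\<in>Cs. (\<Sum>e. ennreal (of_nat (C c e))) = 1) \<and>
     (\<forall>r\<in>Rs. \<forall>c\<in>Cs.
        (\<Sum>e. ennreal (of_nat (e * M r c e))) =
        (\<Sum>e. ennreal (of_nat (e * R r e))) + (\<Sum>e. ennreal (of_nat (e * C c e)))))"

definition blp_objective :: "(nat \<Rightarrow> nat) \<Rightarrow> ennreal" where
  "blp_objective U = (\<Sum>e. ennreal (of_nat (U e)))"

definition blp_value :: "nat \<Rightarrow> nat \<Rightarrow> nat \<Rightarrow> ennreal" where
  "blp_value K L T = Inf {blp_objective U | U R C M. blp_feasible K L T U R C M}"

end

theory Submission
  imports Defs
begin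



definition good :: "nat \<Rightarrow> nat \<Rightarrow> nat \<Rightarrow> (nat \<Rightarrow> nat) \<Rightarrow> (nat \<Rightarrow> nat) \<Rightarrow> bool" where
  "good K L T a b \<longleftrightarrow> inj_on a {1..K+T} \<and> inj_on b {1..L+T} \<and>
    (\<forall>r'\<in>{1..K}. \<forall>c'\<in>{1..L}. \<forall>r\<in>{1..K+T}. \<forall>c\<in>{1..L+T}.
       a r + b c = a r' + b c' \<longrightarrow> r = r' \<and> c = c')"

lemma set_nth1: "set xs = (\<lambda>r. xs!(r-1)) ` {1..length xs}"
proof -
  have "set xs = (\<lambda>i. xs!i) ` {..<length xs}" by (auto simp: set_conv_nth)
  also have "{..<length xs} = (\<lambda>r. r - 1) ` {1..length xs}"
    by (auto simp: image_iff intro!: bexI[where x="Suc _"])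
  finally show ?thesis by (simp add: image_image)
qed

lemma inj_nth1: "distinct xs \<Longrightarrow> inj_on (\<lambda>r. xs!(r-1)) {1..length xs}"
  by (auto simp: inj_on_def nth_eq_iff_index_eq)

lemma finite_sumset: "finite A \<Longrightarrow> finite B \<Longrightarrow> finite (sumset A B)"
proof -
  assume "finite A" "finite B"
  have "sumset A B = (\<lambda>(x,y). x + y) ` (A \<times> B)" by (auto simp: sumset_def)
  then show ?thesis using \<open>finite A\<close> \<open>finite B\<close> by simp
qed

lemma ex1_uniq: "\<exists>!x. P x \<Longrightarrow> P y \<Longrightarrow> P z \<Longrightarrow> y = z" by blast

lemma table_to_good:
  assumes dt: "degree_table K L T ap as bp bs"
  defines "a \<equiv> \<lambda>r. (ap@as)!(r-1)" and "b \<equiv> \<lambda>c. (bp@bs)!(c-1)"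
  shows "good K L T a b \<and> Nval (ap@as) (bp@bs) = card (sumset (a`{1..K+T}) (b`{1..L+T}))"
proof -
  have D: "length ap = K \<and> length as = T \<and> length bp = L \<and> length bs = T \<and>
     distinct (ap @ as) \<and> distinct (bp @ bs) \<and>
     (\<forall>n \<in> sumset (set ap) (set bp).
        \<exists>!p. p \<in> set (ap @ as) \<times> set (bp @ bs) \<and> fst p + snd p = n)"
    using dt unfolding degree_table_def .
  note c1 = D[THEN conjunct2] note c2 = c1[THEN conjunct2] note c3 = c2[THEN conjunct2]
  note c4 = c3[THEN conjunct2] note c5 = c4[THEN conjunct2] note c6 = c5[THEN conjunct2]
  have len: "length ap = K" "length as = T" "length bp = L" "length bs = T"
    using D[THEN conjunct1] c1[THEN conjunct1] c2[THEN conjunct1] c3[THEN conjunct1] .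
  have d1: "distinct (ap@as)" using c4[THEN conjunct1] .
  have d2: "distinct (bp@bs)" using c5[THEN conjunct1] .
  have u: "\<forall>n \<in> sumset (set ap) (set bp).
        \<exists>!p. p \<in> set (ap @ as) \<times> set (bp @ bs) \<and> fst p + snd p = n" using c6 .
  have sa: "set (ap@as) = a ` {1..K+T}" unfolding a_def using set_nth1[of "ap@as"] len by simp
  have sb: "set (bp@bs) = b ` {1..L+T}" unfolding b_def using set_nth1[of "bp@bs"] len by simp
  have ia: "inj_on a {1..K+T}" unfolding a_def using inj_nth1[OF d1] len by simp
  have ib: "inj_on b {1..L+T}" unfolding b_def using inj_nth1[OF d2] len by simp
  have sap: "set ap = a ` {1..K}"
  proof -
    have "a ` {1..K} = (\<lambda>r. ap!(r-1)) ` {1..K}"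
      by (rule image_cong) (auto simp: a_def nth_append len)
    then show ?thesis using set_nth1[of ap] len by simp
  qed
  have sbp: "set bp = b ` {1..L}"
  proof -
    have "b ` {1..L} = (\<lambda>r. bp!(r-1)) ` {1..L}"
      by (rule image_cong) (auto simp: b_def nth_append len)
    then show ?thesis using set_nth1[of bp] len by simp
  qed
  have "\<forall>r'\<in>{1..K}. \<forall>c'\<in>{1..L}. \<forall>r\<in>{1..K+T}. \<forall>c\<in>{1..L+T}.
       a r + b c = a r' + b c' \<longrightarrow> r = r' \<and> c = c'"
  proof (intro ballI impI)
    fix r' c' r c assume h: "r' \<in> {1..K}" "c' \<in> {1..L}" "r \<in> {1..K+T}" "c \<in> {1..L+T}"
      "a r + b c = a r' + b c'"
    have "a r' + b c' \<in> sumset (set ap) (set bp)" unfolding sumset_def sap sbp using h by blast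
    then have E: "\<exists>!p. p \<in> set (ap @ as) \<times> set (bp @ bs) \<and> fst p + snd p = a r' + b c'" by (rule bspec[OF u])
    have m1: "(a r, b c) \<in> set (ap @ as) \<times> set (bp @ bs) \<and> fst (a r, b c) + snd (a r, b c) = a r' + b c'"
    proof
      show "(a r, b c) \<in> set (ap @ as) \<times> set (bp @ bs)" unfolding sa sb using h by blast
    qed (simp add: h(5))
    have m2: "(a r', b c') \<in> set (ap @ as) \<times> set (bp @ bs) \<and> fst (a r', b c') + snd (a r', b c') = a r' + b c'"
    proof
      show "(a r', b c') \<in> set (ap @ as) \<times> set (bp @ bs)" unfolding sa sb using h by auto
    qed simp
    have "(a r, b c) = (a r', b c')" using ex1_uniq[OF E m1 m2] .
    then have "a r = a r'" "b c = b c'" by simp_all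
    then show "r = r' \<and> c = c'" using ia ib h(1-4) unfolding inj_on_def
      by (metis atLeastAtMost_iff le_add1 le_trans)
  qed
  then have "good K L T a b" using ia ib unfolding good_def by (intro conjI)
  moreover have "Nval (ap@as) (bp@bs) = card (sumset (a`{1..K+T}) (b`{1..L+T}))"
    unfolding Nval_def sa sb ..
  ultimately show ?thesis ..
qed

lemma good_to_table:
  assumes g: "good K L T a b"
  shows "degree_table K L T (map a [1..<K+1]) (map a [K+1..<K+T+1]) (map b [1..<L+1]) (map b [L+1..<L+T+1])
    \<and> Nval (map a [1..<K+1] @ map a [K+1..<K+T+1]) (map b [1..<L+1] @ map b [L+1..<L+T+1])
       = card (sumset (a`{1..K+T}) (b`{1..L+T}))"
proof -
  have e1: "map a [1..<K+1] @ map a [K+1..<K+T+1] = map a [1..<K+T+1]"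
  proof -
    have "[1..<K+1+T] = [1..<K+1] @ [K+1..<K+1+T]" by (rule upt_add_eq_append) simp
    then have "[1..<K+T+1] = [1..<K+1] @ [K+1..<K+T+1]" by (simp add: ac_simps)
    then show ?thesis by simp
  qed
  have e2: "map b [1..<L+1] @ map b [L+1..<L+T+1] = map b [1..<L+T+1]"
  proof -
    have "[1..<L+1+T] = [1..<L+1] @ [L+1..<L+1+T]" by (rule upt_add_eq_append) simp
    then have "[1..<L+T+1] = [1..<L+1] @ [L+1..<L+T+1]" by (simp add: ac_simps)
    then show ?thesis by simp
  qed
  have s1: "set (map a [1..<K+T+1]) = a ` {1..K+T}" by auto
  have s2: "set (map b [1..<L+T+1]) = b ` {1..L+T}" by auto
  have ia: "inj_on a {1..K+T}" and ib: "inj_on b {1..L+T}" and gu: "\<forall>r'\<in>{1..K}. \<forall>c'\<in>{1..L}. \<forall>r\<in>{1..K+T}. \<forall>c\<in>{1..L+T}.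
       a r + b c = a r' + b c' \<longrightarrow> r = r' \<and> c = c'"
    using g[unfolded good_def, THEN conjunct1] g[unfolded good_def, THEN conjunct2, THEN conjunct1]
      g[unfolded good_def, THEN conjunct2, THEN conjunct2] .
  have lens: "length (map a [1..<K+1]) = K" "length (map a [K+1..<K+T+1]) = T"
    "length (map b [1..<L+1]) = L" "length (map b [L+1..<L+T+1]) = T" by simp_all
  have st1: "set [1..<K+T+1] = {1..K+T}" and st2: "set [1..<L+T+1] = {1..L+T}" by auto
  have d1: "distinct (map a [1..<K+T+1])" unfolding distinct_map st1 using ia distinct_upt by blast
  have d2: "distinct (map b [1..<L+T+1])" unfolding distinct_map st2 using ib distinct_upt by blast
  have U: "\<forall>n \<in> sumset (set (map a [1..<K+1])) (set (map b [1..<L+1])).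
        \<exists>!p. p \<in> set (map a [1..<K+T+1]) \<times> set (map b [1..<L+T+1]) \<and> fst p + snd p = n"
    unfolding s1 s2
  proof
    fix n assume "n \<in> sumset (set (map a [1..<K+1])) (set (map b [1..<L+1]))"
    moreover have stK: "set [1..<K+1] = {1..K}" and stL: "set [1..<L+1] = {1..L}" by auto
    ultimately obtain r' c' where h: "r' \<in> {1..K}" "c' \<in> {1..L}" "n = a r' + b c'"
      unfolding sumset_def set_map by blast
    show "\<exists>!p. p \<in> a ` {1..K+T} \<times> b ` {1..L+T} \<and> fst p + snd p = n"
    proof (rule ex1I)
      show "(a r', b c') \<in> a ` {1..K+T} \<times> b ` {1..L+T} \<and> fst (a r', b c') + snd (a r', b c') = n"
        using h by auto
    next
      fix p assume "p \<in> a ` {1..K+T} \<times> b ` {1..L+T} \<and> fst p + snd p = n"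
      then obtain r c where rc: "r \<in> {1..K+T}" "c \<in> {1..L+T}" "p = (a r, b c)" "a r + b c = n" by auto
      have "a r + b c = a r' + b c'" using rc(4) h(3) by simp
      then have "r = r' \<and> c = c'" using gu h(1,2) rc(1,2) by blast
      then show "p = (a r', b c')" using rc by simp
    qed
  qed
  have "degree_table K L T (map a [1..<K+1]) (map a [K+1..<K+T+1]) (map b [1..<L+1]) (map b [L+1..<L+T+1])"
    unfolding degree_table_def e1 e2
    using lens d1 d2 U by (intro conjI) assumption+
  moreover have "Nval (map a [1..<K+1] @ map a [K+1..<K+T+1]) (map b [1..<L+1] @ map b [L+1..<L+T+1])
       = card (sumset (a`{1..K+T}) (b`{1..L+T}))" unfolding Nval_def e1 e2 s1 s2 ..
  ultimately show ?thesis ..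
qed



lemma sum_ind_card:
  assumes "finite A" shows "(\<Sum>x\<in>A. (if P x then 1 else 0::nat)) = card {x\<in>A. P x}"
  using assms by (simp add: sum.If_cases Int_def)

lemma sum_ind_single:
  assumes "finite A" "inj_on f A"
  shows "(\<Sum>x\<in>A. (if f x = e then 1 else 0::nat)) \<le> 1"
proof (cases "\<exists>x0\<in>A. f x0 = e")
  case True
  then obtain x0 where x0: "x0 \<in> A" "f x0 = e" by blast
  have "(\<Sum>x\<in>A. (if f x = e then 1 else 0::nat)) = (\<Sum>x\<in>A. (if x = x0 then 1 else 0))"
    using assms(2) x0 by (intro sum.cong) (auto simp: inj_on_def)
  also have "\<dots> = 1" using x0 assms(1) by simp
  finally show ?thesis by simp
next
  case False
  then show ?thesis by simp
qed

lemma suminf_ind: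
  "(\<Sum>e. ennreal (of_nat (if x = e then 1 else 0))) = 1"
proof -
  have "(\<Sum>e. ennreal (of_nat (if x = e then 1 else 0))) = (\<Sum>e\<in>{x}. ennreal (of_nat (if x = e then 1 else 0)))"
    by (rule suminf_finite) auto
  then show ?thesis by simp
qed

lemma suminf_ind_mult:
  "(\<Sum>e. ennreal (of_nat (e * (if x = e then 1 else 0)))) = ennreal (of_nat x)"
proof -
  have "(\<Sum>e. ennreal (of_nat (e * (if x = e then 1 else 0)))) = (\<Sum>e\<in>{x}. ennreal (of_nat (e * (if x = e then 1 else 0))))"
    by (rule suminf_finite) auto
  then show ?thesis by simp
qed

lemma good_to_blp:
  assumes g: "good K L T a b"
  defines "S \<equiv> sumset (a`{1..K+T}) (b`{1..L+T})"
  shows "blp_feasible K L T (\<lambda>e. if e \<in> S then 1 else 0) (\<lambda>r e. if a r = e then 1 else 0)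
     (\<lambda>c e. if b c = e then 1 else 0) (\<lambda>r c e. if a r + b c = e then 1 else 0)
    \<and> blp_objective (\<lambda>e. if e \<in> S then 1 else 0) = ennreal (of_nat (card S))"
proof -
  let ?Rs = "{1..K+T}" and ?Cs = "{1..L+T}"
  have ia: "inj_on a ?Rs" and ib: "inj_on b ?Cs" and gu: "\<forall>r'\<in>{1..K}. \<forall>c'\<in>{1..L}. \<forall>r\<in>?Rs. \<forall>c\<in>?Cs.
       a r + b c = a r' + b c' \<longrightarrow> r = r' \<and> c = c'"
    using g[unfolded good_def, THEN conjunct1] g[unfolded good_def, THEN conjunct2, THEN conjunct1]
      g[unfolded good_def, THEN conjunct2, THEN conjunct2] .
  have fS: "finite S" unfolding S_def by (intro finite_sumset) auto
  have obj: "blp_objective (\<lambda>e. if e \<in> S then 1 else 0) = ennreal (of_nat (card S))"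
  proof -
    have "blp_objective (\<lambda>e. if e \<in> S then 1 else 0) = (\<Sum>e\<in>S. ennreal (of_nat (if e \<in> S then 1 else 0)))"
      unfolding blp_objective_def by (rule suminf_finite[OF fS]) auto
    also have "\<dots> = (\<Sum>e\<in>S. 1)" by (rule sum.cong) simp_all
    also have "\<dots> = of_nat (card S)" by simp
    also have "\<dots> = ennreal (of_nat (card S))" by (rule ennreal_of_nat_eq_real_of_nat)
    finally show ?thesis .
  qed
  have MU: "\<forall>r\<in>?Rs. \<forall>c\<in>?Cs. \<forall>e. (if a r + b c = e then 1 else 0::nat) \<le> (if e \<in> S then 1 else 0)"
    unfolding S_def sumset_def by auto
  have cardP: "card {p \<in> ?Rs \<times> ?Cs. a (fst p) + b (snd p) = e} \<le> min K L + T" for e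
  proof -
    let ?P = "{p \<in> ?Rs \<times> ?Cs. a (fst p) + b (snd p) = e}"
    have "inj_on fst ?P"
    proof (rule inj_onI)
      fix p q assume "p \<in> ?P" "q \<in> ?P" "fst p = fst q"
      then have "b (snd p) = b (snd q)" "snd p \<in> ?Cs" "snd q \<in> ?Cs" by auto
      then have "snd p = snd q" by (rule inj_onD[OF ib])
      then show "p = q" using \<open>fst p = fst q\<close> by (simp add: prod_eq_iff)
    qed
    then have "card ?P = card (fst ` ?P)" by (simp add: card_image)
    also have "\<dots> \<le> card ?Rs" by (rule card_mono) auto
    finally have 1: "card ?P \<le> K + T" by simp
    have "inj_on snd ?P"
    proof (rule inj_onI)
      fix p q assume "p \<in> ?P" "q \<in> ?P" "snd p = snd q"
      then have "a (fst p) = a (fst q)" "fst p \<in> ?Rs" "fst q \<in> ?Rs" by auto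
      then have "fst p = fst q" by (rule inj_onD[OF ia])
      then show "p = q" using \<open>snd p = snd q\<close> by (simp add: prod_eq_iff)
    qed
    then have "card ?P = card (snd ` ?P)" by (simp add: card_image)
    also have "\<dots> \<le> card ?Cs" by (rule card_mono) auto
    finally have 2: "card ?P \<le> L + T" by simp
    show ?thesis using 1 2 by simp
  qed
  have lam: "int (\<Sum>(r,c) \<in> (?Rs \<times> ?Cs) - {(r',c')}. (if a r + b c = e then 1 else 0::nat))
      \<le> int (min K L + T) * (1 - int (if a r' + b c' = e then 1 else 0))"
    if h: "r' \<in> {1..K}" "c' \<in> {1..L}" for e r' c'
  proof (cases "a r' + b c' = e")
    case True
    have "(\<Sum>(r,c) \<in> (?Rs \<times> ?Cs) - {(r',c')}. (if a r + b c = e then 1 else 0::nat)) = 0"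
    proof (rule sum.neutral, rule ballI)
      fix p assume p: "p \<in> ?Rs \<times> ?Cs - {(r', c')}"
      obtain r c where pe: "p = (r, c)" by (cases p)
      have rc: "r \<in> ?Rs" "c \<in> ?Cs" "(r, c) \<notin> {(r', c')}" using p unfolding pe by auto
      have "a r + b c \<noteq> e"
      proof
        assume "a r + b c = e"
        then have "a r + b c = a r' + b c'" using True by simp
        then have "r = r' \<and> c = c'" using gu h rc(1,2) by blast
        then show False using rc(3) by simp
      qed
      then show "(case p of (r, c) \<Rightarrow> if a r + b c = e then 1 else 0) = (0::nat)"
        unfolding pe by simp
    qed
    then show ?thesis using True by simp
  next
    case False
    have "(\<Sum>(r,c) \<in> (?Rs \<times> ?Cs) - {(r',c')}. (if a r + b c = e then 1 else 0::nat))
        \<le> (\<Sum>(r,c) \<in> (?Rs \<times> ?Cs). (if a r + b c = e then 1 else 0::nat))"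
      by (rule sum_mono2) auto
    also have "\<dots> = (\<Sum>p \<in> (?Rs \<times> ?Cs). (if a (fst p) + b (snd p) = e then 1 else 0::nat))"
      by (simp add: case_prod_beta)
    also have "\<dots> = card {p \<in> ?Rs \<times> ?Cs. a (fst p) + b (snd p) = e}"
      by (rule sum_ind_card) auto
    also have "\<dots> \<le> min K L + T" by (rule cardP)
    finally have "int (\<Sum>(r,c) \<in> (?Rs \<times> ?Cs) - {(r',c')}. (if a r + b c = e then 1 else 0::nat)) \<le> int (min K L + T)"
      by (simp only: of_nat_le_iff)
    then show ?thesis using False by simp
  qed
  have Rsum: "(\<Sum>r\<in>?Rs. (if a r = e then 1 else 0::nat)) \<le> 1" for e
    by (rule sum_ind_single[OF _ ia]) auto
  have Csum: "(\<Sum>c\<in>?Cs. (if b c = e then 1 else 0::nat)) \<le> 1" for e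
    by (rule sum_ind_single[OF _ ib]) auto
  have sM: "(\<Sum>e. ennreal (of_nat (e * (if a r + b c = e then 1 else 0)))) =
        (\<Sum>e. ennreal (of_nat (e * (if a r = e then 1 else 0)))) + (\<Sum>e. ennreal (of_nat (e * (if b c = e then 1 else 0))))" for r c
    unfolding suminf_ind_mult by (simp add: ennreal_plus[symmetric] del: ennreal_plus)
  have "blp_feasible K L T (\<lambda>e. if e \<in> S then 1 else 0) (\<lambda>r e. if a r = e then 1 else 0)
     (\<lambda>c e. if b c = e then 1 else 0) (\<lambda>r c e. if a r + b c = e then 1 else 0)"
    unfolding blp_feasible_def Let_def
    apply (intro conjI)
    subgoal by simp
    subgoal by simp
    subgoal by simp
    subgoal by simp
    subgoal by (rule MU)
    subgoal by (intro allI ballI lam)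
    subgoal by (intro allI Rsum)
    subgoal by (intro allI Csum)
    subgoal by (intro ballI suminf_ind)
    subgoal by (intro ballI suminf_ind)
    subgoal by (intro ballI suminf_ind)
    subgoal by (intro ballI sM)
    done
  then show ?thesis using obj by simp
qed




lemma one_hot:
  fixes f :: "nat \<Rightarrow> nat"
  assumes f01: "\<forall>e. f e \<in> {0,1}" and fs: "(\<Sum>e. ennreal (of_nat (f e))) = 1"
  shows "\<exists>e0. f = (\<lambda>e. if e0 = e then 1 else 0)"
proof -
  have ex: "\<exists>e0. f e0 = 1"
  proof (rule ccontr)
    assume "\<not> (\<exists>e0. f e0 = 1)"
    then have "\<forall>e. f e = 0" using f01 by auto
    then have "(\<Sum>e. ennreal (of_nat (f e))) = 0" by simp
    then show False using fs by simp
  qed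
  then obtain e0 where e0: "f e0 = 1" by blast
  have un: "f e = 0" if "e \<noteq> e0" for e
  proof (rule ccontr)
    assume "f e \<noteq> 0"
    then have fe: "f e = 1" using f01[rule_format, of e] by auto
    have "(\<Sum>x\<in>{e0,e}. ennreal (of_nat (f x))) \<le> (\<Sum>e. ennreal (of_nat (f e)))"
      by (rule sum_le_suminf[OF summableI]) auto
    moreover have "(\<Sum>x\<in>{e0,e}. ennreal (of_nat (f x))) = 2" using that e0 fe by simp
    ultimately show False using fs by simp
  qed
  show ?thesis
  proof (intro exI ext)
    fix e show "f e = (if e0 = e then 1 else 0)" using un e0 by (cases "e0 = e") auto
  qed
qed

lemma blp_to_good:
  assumes feas: "blp_feasible K L T U R C M"
  shows "\<exists>a b. good K L T a b \<and> ennreal (of_nat (card (sumset (a`{1..K+T}) (b`{1..L+T})))) \<le> blp_objective U"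
proof -
  let ?Rs = "{1..K+T}" and ?Cs = "{1..L+T}"
  note F = feas[unfolded blp_feasible_def Let_def]
  note U01 = F[THEN conjunct1]
  note F0 = F[THEN conjunct2]
  note R01 = F0[THEN conjunct1]
  note F1 = F0[THEN conjunct2]
  note C01 = F1[THEN conjunct1]
  note F2 = F1[THEN conjunct2]
  note M01 = F2[THEN conjunct1]
  note F3 = F2[THEN conjunct2]
  note FMU = F3[THEN conjunct1]
  note F4 = F3[THEN conjunct2]
  note Flam = F4[THEN conjunct1]
  note F5 = F4[THEN conjunct2]
  note FRsum = F5[THEN conjunct1]
  note F6 = F5[THEN conjunct2]
  note FCsum = F6[THEN conjunct1]
  note F7 = F6[THEN conjunct2]
  note FMs = F7[THEN conjunct1]
  note F8 = F7[THEN conjunct2]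
  note FRs = F8[THEN conjunct1]
  note F9 = F8[THEN conjunct2]
  note FCs = F9[THEN conjunct1]
  note F10 = F9[THEN conjunct2]
  note Feq = F10
  have "\<forall>r\<in>?Rs. \<exists>e0. R r = (\<lambda>e. if e0 = e then 1 else 0)"
  proof
    fix r assume "r \<in> ?Rs"
    show "\<exists>e0. R r = (\<lambda>e. if e0 = e then 1 else 0)"
      by (rule one_hot[OF _ FRs[rule_format, OF \<open>r \<in> ?Rs\<close>]]) (use R01 in blast)
  qed
  then obtain a where a: "\<forall>r\<in>?Rs. R r = (\<lambda>e. if a r = e then 1 else 0)" by (rule bchoice[THEN exE])
  have "\<forall>c\<in>?Cs. \<exists>e0. C c = (\<lambda>e. if e0 = e then 1 else 0)"
  proof
    fix c assume "c \<in> ?Cs"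
    show "\<exists>e0. C c = (\<lambda>e. if e0 = e then 1 else 0)"
      by (rule one_hot[OF _ FCs[rule_format, OF \<open>c \<in> ?Cs\<close>]]) (use C01 in blast)
  qed
  then obtain b where b: "\<forall>c\<in>?Cs. C c = (\<lambda>e. if b c = e then 1 else 0)" by (rule bchoice[THEN exE])
  have Mf: "M r c = (\<lambda>e. if a r + b c = e then 1 else 0)" if rc: "r \<in> ?Rs" "c \<in> ?Cs" for r c
  proof -
    obtain e0 where e0: "M r c = (\<lambda>e. if e0 = e then 1 else 0)"
      using one_hot[OF _ FMs[rule_format, OF rc]] M01 by blast
    have "(\<Sum>e. ennreal (of_nat (e * M r c e))) =
        (\<Sum>e. ennreal (of_nat (e * R r e))) + (\<Sum>e. ennreal (of_nat (e * C c e)))"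
      using Feq rc by blast
    then have "ennreal (of_nat e0) = ennreal (of_nat (a r)) + ennreal (of_nat (b c))"
      unfolding e0 a[rule_format, OF rc(1)] b[rule_format, OF rc(2)] suminf_ind_mult .
    then have "ennreal (of_nat e0) = ennreal (of_nat (a r + b c))"
      by (simp add: ennreal_plus[symmetric] del: ennreal_plus)
    then have "e0 = a r + b c" by (subst (asm) ennreal_inj) auto
    then show ?thesis using e0 by simp
  qed
  have ia: "inj_on a ?Rs"
  proof (rule inj_onI)
    fix r1 r2 assume h: "r1 \<in> ?Rs" "r2 \<in> ?Rs" "a r1 = a r2"
    show "r1 = r2"
    proof (rule ccontr)
      assume ne: "r1 \<noteq> r2"
      have "(\<Sum>r\<in>{r1,r2}. R r (a r1)) \<le> (\<Sum>r\<in>?Rs. R r (a r1))"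
        by (rule sum_mono2) (use h in auto)
      also have "\<dots> \<le> 1" using FRsum by blast
      finally show False using ne h a by simp
    qed
  qed
  have ib: "inj_on b ?Cs"
  proof (rule inj_onI)
    fix r1 r2 assume h: "r1 \<in> ?Cs" "r2 \<in> ?Cs" "b r1 = b r2"
    show "r1 = r2"
    proof (rule ccontr)
      assume ne: "r1 \<noteq> r2"
      have "(\<Sum>r\<in>{r1,r2}. C r (b r1)) \<le> (\<Sum>r\<in>?Cs. C r (b r1))"
        by (rule sum_mono2) (use h in auto)
      also have "\<dots> \<le> 1" using FCsum by blast
      finally show False using ne h b by simp
    qed
  qed
  have gu: "\<forall>r'\<in>{1..K}. \<forall>c'\<in>{1..L}. \<forall>r\<in>?Rs. \<forall>c\<in>?Cs.
       a r + b c = a r' + b c' \<longrightarrow> r = r' \<and> c = c'"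
  proof (intro ballI impI)
    fix r' c' r c assume h: "r' \<in> {1..K}" "c' \<in> {1..L}" "r \<in> ?Rs" "c \<in> ?Cs"
      "a r + b c = a r' + b c'"
    let ?e = "a r' + b c'"
    have h': "r' \<in> ?Rs" "c' \<in> ?Cs" using h(1,2) by auto
    have M1: "M r' c' ?e = 1" using Mf[OF h'] by simp
    have "int (\<Sum>(r,c) \<in> (?Rs \<times> ?Cs) - {(r',c')}. M r c ?e) \<le> int (min K L + T) * (1 - int (M r' c' ?e))"
      using Flam h(1,2) by blast
    then have "int (\<Sum>(r,c) \<in> (?Rs \<times> ?Cs) - {(r',c')}. M r c ?e) \<le> 0" using M1 by (simp del: of_nat_sum)
    then have "(\<Sum>(r,c) \<in> (?Rs \<times> ?Cs) - {(r',c')}. M r c ?e) = 0" by (simp only: of_nat_le_0_iff)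
    then have Z: "\<forall>p \<in> (?Rs \<times> ?Cs) - {(r',c')}. (case p of (r,c) \<Rightarrow> M r c ?e) = 0"
      by (subst (asm) sum_eq_0_iff) auto
    show "r = r' \<and> c = c'"
    proof (rule ccontr)
      assume "\<not> (r = r' \<and> c = c')"
      then have "(r,c) \<in> (?Rs \<times> ?Cs) - {(r',c')}" using h(3,4) by auto
      then have "(case (r,c) of (r,c) \<Rightarrow> M r c ?e) = 0" by (rule bspec[OF Z])
      then have "M r c ?e = 0" by simp
      moreover have "M r c ?e = 1" using Mf[OF h(3,4)] h(5) by simp
      ultimately show False by simp
    qed
  qed
  have g: "good K L T a b" unfolding good_def using ia ib gu by (intro conjI)
  define S where "S = sumset (a`?Rs) (b`?Cs)"
  have fS: "finite S" unfolding S_def by (intro finite_sumset) auto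
  have SU: "U e = 1" if eS: "e \<in> S" for e
  proof -
    obtain r c where rc: "r \<in> ?Rs" "c \<in> ?Cs" "e = a r + b c" using eS unfolding S_def sumset_def by blast
    have "M r c e = 1" using Mf[OF rc(1,2)] rc(3) by simp
    moreover have "M r c e \<le> U e" using FMU rc(1,2) by blast
    ultimately show ?thesis using U01 by (metis insert_iff le_zero_eq singletonD zero_neq_one)
  qed
  have "ennreal (of_nat (card S)) = of_nat (card S)" by (rule ennreal_of_nat_eq_real_of_nat[symmetric])
  also have "\<dots> = (\<Sum>e\<in>S. 1)" by simp
  also have "\<dots> = (\<Sum>e\<in>S. ennreal (of_nat (U e)))" by (rule sum.cong) (simp_all add: SU)
  also have "\<dots> \<le> blp_objective U" unfolding blp_objective_def
    by (rule sum_le_suminf[OF summableI fS]) auto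
  finally show ?thesis using g unfolding S_def by blast
qed




lemma good_exists: "good K L T (\<lambda>r. r) (\<lambda>c. c * (K+T+1))"
proof -
  let ?N = "K+T+1"
  have ib: "inj_on (\<lambda>c. c * ?N) {1..L+T}"
  proof (rule inj_onI)
    fix x y assume xy: "x * ?N = y * ?N"
    have N0: "?N \<noteq> 0" by simp
    show "x = y" using xy by (simp only: mult_right_cancel[OF N0])
  qed
  have "\<forall>r'\<in>{1..K}. \<forall>c'\<in>{1..L}. \<forall>r\<in>{1..K+T}. \<forall>c\<in>{1..L+T}.
       r + c * ?N = r' + c' * ?N \<longrightarrow> r = r' \<and> c = c'"
  proof (intro ballI impI)
    fix r' c' r c assume h: "r' \<in> {1..K}" "c' \<in> {1..L}" "r \<in> {1..K+T}" "c \<in> {1..L+T}"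
      "r + c * ?N = r' + c' * ?N"
    have l1: "r < ?N" and l2: "r' < ?N" using h(1,3) by auto
    have m1: "(r + c * ?N) mod ?N = r" unfolding mod_mult_self1 using l1 by (rule mod_less)
    have m2: "(r' + c' * ?N) mod ?N = r'" unfolding mod_mult_self1 using l2 by (rule mod_less)
    have rr: "r = r'" using m1 m2 h(5) by simp
    then have cN: "c * ?N = c' * ?N" using h(5) by simp
    have N0: "?N \<noteq> 0" by simp
    have "c = c'" using cN unfolding mult_right_cancel[OF N0] .
    then show "r = r' \<and> c = c'" using rr by simp
  qed
  moreover have ia: "inj_on (\<lambda>r. r) {1..K+T}" by (rule inj_onI)
  ultimately show ?thesis unfolding good_def using ib by (intro conjI)
qed

theorem theorem9:
  fixes K L T :: nat
  assumes "K > 0" and "L > 0" and "T > 0"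
  shows "ennreal (of_nat (NKLT K L T)) = blp_value K L T"
proof -
  let ?A = "{Nval (ap @ as) (bp @ bs) | ap as bp bs. degree_table K L T ap as bp bs}"
  let ?G = "{card (sumset (a`{1..K+T}) (b`{1..L+T})) | a b. good K L T a b}"
  have AG: "?A = ?G"
  proof (intro equalityI subsetI)
    fix x assume "x \<in> ?A"
    then obtain ap as bp bs where x: "x = Nval (ap @ as) (bp @ bs)" "degree_table K L T ap as bp bs"
      by blast
    from table_to_good[OF x(2)] show "x \<in> ?G" unfolding x(1) by blast
  next
    fix x assume "x \<in> ?G"
    then obtain a b where x: "x = card (sumset (a`{1..K+T}) (b`{1..L+T}))" "good K L T a b"
      by blast
    from good_to_table[OF x(2)] show "x \<in> ?A" unfolding x(1) by (metis (mono_tags, lifting) mem_Collect_eq)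
  qed
  have NG: "NKLT K L T = Inf ?G" unfolding NKLT_def AG ..
  have Gne: "?G \<noteq> {}" using good_exists[of K L T] by blast
  have Nmem: "NKLT K L T \<in> ?G" unfolding NG by (rule Inf_nat_def1[OF Gne])
  have Nle: "NKLT K L T \<le> g" if "g \<in> ?G" for g unfolding NG by (rule cInf_lower[OF that]) simp
  let ?B = "{blp_objective U | U R C M. blp_feasible K L T U R C M}"
  have "Inf ?B \<le> ennreal (of_nat (NKLT K L T))"
  proof -
    obtain a b where ab: "NKLT K L T = card (sumset (a`{1..K+T}) (b`{1..L+T}))" "good K L T a b"
      using Nmem by blast
    let ?S = "sumset (a`{1..K+T}) (b`{1..L+T})"
    let ?U = "\<lambda>e. if e \<in> ?S then 1 else (0::nat)"
    have F: "blp_feasible K L T ?U (\<lambda>r e. if a r = e then 1 else 0)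
     (\<lambda>c e. if b c = e then 1 else 0) (\<lambda>r c e. if a r + b c = e then 1 else 0)"
      and O: "blp_objective ?U = ennreal (of_nat (card ?S))"
      using good_to_blp[OF ab(2)] by simp_all
    have "ennreal (of_nat (NKLT K L T)) \<in> ?B" unfolding ab(1) O[symmetric] using F by blast
    then show ?thesis by (rule Inf_lower)
  qed
  moreover have "ennreal (of_nat (NKLT K L T)) \<le> Inf ?B"
  proof (rule Inf_greatest)
    fix x assume "x \<in> ?B"
    then obtain U R C M where x: "x = blp_objective U" "blp_feasible K L T U R C M" by blast
    obtain a b where ab: "good K L T a b"
      "ennreal (of_nat (card (sumset (a`{1..K+T}) (b`{1..L+T})))) \<le> blp_objective U"
      using blp_to_good[OF x(2)] by blast
    have "NKLT K L T \<le> card (sumset (a`{1..K+T}) (b`{1..L+T}))" by (rule Nle) (use ab(1) in blast)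
    then have "ennreal (of_nat (NKLT K L T)) \<le> ennreal (of_nat (card (sumset (a`{1..K+T}) (b`{1..L+T}))))"
      by (intro ennreal_leI) simp
    also have "\<dots> \<le> x" using ab(2) x(1) by simp
    finally show "ennreal (of_nat (NKLT K L T)) \<le> x" .
  qed
  ultimately show ?thesis unfolding blp_value_def by (rule antisym[rotated])
qed


end
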